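(* Let $4\le\beta\le n-2$ and let $\gamma_1,\gamma_2,\gamma_3$ be integers with $\gamma_1,\gamma_2,\gamma_3\ge 2$ and $\gamma_1+\gamma_2+\gamma_3=n$. Then $\mathcal T_{(n),(\beta),(\gamma_1,\gamma_2,\gamma_3)}$ has infinitely many $G$-orbits.
   Context: $\mathbb F$ is an infinite field of characteristic $\ne 2$. Equip $\mathbb F^{2n}$ (canonical basis $e_1,\ldots,e_{2n}$) with the symmetric bilinear form $(e_i,e_j)=\delta_{i,2n+1-j}$, and let $G={\rm O}_{2n}(\mathbb F)$ be its isometry group. A subspace $V$ is isotropic if $(V,V)=\{0\}$. For a sequence ${\bf a}=(\alpha_1,\ldots,\alpha_p)$ of positive integers with $\sum\alpha_j\le n$, $M_{\bf a}$ is the set of flags $V_1\subset\cdots\subset V_p$ in $\mathbb F^{2n}$ with $\dim V_j=\alpha_1+\cdots+\alpha_j$ and $V_p$ isotropic. $\mathcal T_{{\bf a},{\bf b},{\bf c}}=M_{\bf a}\times M_{\bf b}\times M_{\bf c}$ with the diagonal $G$-action. *)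

theory Defs
  imports Complex_Main "HOL-Library.Function_Algebras"
begin

text \<open>Vectors of F^(2n) are functions nat => F supported on {0..<2n};
  index i (0-based) corresponds to the basis vector e_(i+1).\<close>

type_synonym 'a vec = "nat \<Rightarrow> 'a"

definition vsmult :: "'a::field \<Rightarrow> 'a vec \<Rightarrow> 'a vec" where
  "vsmult c v = (\<lambda>i. c * v i)"

definition ambient :: "nat \<Rightarrow> ('a::field) vec set" where
  "ambient n = {v. \<forall>i\<ge>2*n. v i = 0}"

definition form :: "nat \<Rightarrow> ('a::field) vec \<Rightarrow> 'a vec \<Rightarrow> 'a" where
  "form n v w = (\<Sum>i<2*n. v i * w (2*n - 1 - i))"

definition subsp :: "('a::field) vec set \<Rightarrow> bool" where
  "subsp V = module.subspace vsmult V"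

definition vdim :: "('a::field) vec set \<Rightarrow> nat" where
  "vdim V = vector_space.dim vsmult V"

definition isotropic :: "nat \<Rightarrow> ('a::field) vec set \<Rightarrow> bool" where
  "isotropic n V \<longleftrightarrow> (\<forall>v\<in>V. \<forall>w\<in>V. form n v w = 0)"

definition orth_group :: "nat \<Rightarrow> (('a::field) vec \<Rightarrow> 'a vec) set" where
  "orth_group n = {g. bij_betw g (ambient n) (ambient n)
      \<and> (\<forall>u\<in>ambient n. \<forall>v\<in>ambient n. g (u + v) = g u + g v)
      \<and> (\<forall>c. \<forall>v\<in>ambient n. g (vsmult c v) = vsmult c (g v))
      \<and> (\<forall>u\<in>ambient n. \<forall>v\<in>ambient n. form n (g u) (g v) = form n u v)}"

definition flags :: "nat \<Rightarrow> nat list \<Rightarrow> ('a::field) vec set list set" where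
  "flags n a = {Vs. length Vs = length a
      \<and> (\<forall>j<length a. subsp (Vs ! j) \<and> Vs ! j \<subseteq> ambient n
           \<and> vdim (Vs ! j) = sum_list (take (Suc j) a))
      \<and> (\<forall>j. Suc j < length a \<longrightarrow> Vs ! j \<subseteq> Vs ! Suc j)
      \<and> (a \<noteq> [] \<longrightarrow> isotropic n (last Vs))}"

definition triples :: "nat \<Rightarrow> nat list \<Rightarrow> nat list \<Rightarrow> nat list \<Rightarrow>
    (('a::field) vec set list \<times> 'a vec set list \<times> 'a vec set list) set" where
  "triples n a b c = flags n a \<times> flags n b \<times> flags n c"

definition act_flag :: "('a vec \<Rightarrow> 'a vec) \<Rightarrow> 'a vec set list \<Rightarrow> 'a vec set list" where
  "act_flag g Vs = map (\<lambda>V. g ` V) Vs"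

definition orbit_rel :: "nat \<Rightarrow> nat list \<Rightarrow> nat list \<Rightarrow> nat list \<Rightarrow>
    ((('a::field) vec set list \<times> 'a vec set list \<times> 'a vec set list) \<times>
     ('a vec set list \<times> 'a vec set list \<times> 'a vec set list)) set" where
  "orbit_rel n a b c = {((x1,x2,x3),(y1,y2,y3)).
      (x1,x2,x3) \<in> triples n a b c \<and> (y1,y2,y3) \<in> triples n a b c \<and>
      (\<exists>g\<in>orth_group n. act_flag g x1 = y1 \<and> act_flag g x2 = y2 \<and> act_flag g x3 = y3)}"

end

theory Submission
  imports Defs
begin


interpretation VS: vector_space "vsmult :: 'a::field \<Rightarrow> 'a vec \<Rightarrow> 'a vec"
  by unfold_locales (auto simp: vsmult_def algebra_simps fun_eq_iff)

definition ev :: "nat \<Rightarrow> 'a::field vec" where "ev i = (\<lambda>j. if j = i then 1 else 0)"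

lemma ev_apply [simp]: "ev i j = (if j = i then 1 else 0)"
  by (simp add: ev_def)

lemma vsmult_apply [simp]: "vsmult c v i = c * v i"
  by (simp add: vsmult_def)

lemma sum_fun_apply: "(\<Sum>x\<in>A. f x) (i::nat) = (\<Sum>x\<in>A. (f x) i :: 'a::comm_monoid_add)"
  by (induction A rule: infinite_finite_induct) auto

lemma form_add_left: "form n (u + v) w = form n u w + form n v w"
  by (simp add: form_def sum.distrib distrib_right)
lemma form_add_right: "form n w (u + v) = form n w u + form n w v"
  by (simp add: form_def sum.distrib distrib_left)
lemma form_diff_left: "form n (u - v) w = form n u w - form n v w"
  by (simp add: form_def sum_subtractf left_diff_distrib)
lemma form_diff_right: "form n w (u - v) = form n w u - form n w v"
  by (simp add: form_def sum_subtractf right_diff_distrib)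
lemma form_smult_left: "form n (vsmult c u) w = c * form n u w"
  by (simp add: form_def sum_distrib_left mult.assoc)
lemma form_smult_right: "form n w (vsmult c u) = c * form n w u"
  by (simp add: form_def sum_distrib_left mult.left_commute)
lemma form_zero_left [simp]: "form n 0 w = 0"
  by (simp add: form_def)

lemma form_sym: "form n u w = form n w u"
proof -
  have "form n u w = (\<Sum>i<2*n. u i * w (2*n - 1 - i))" by (simp add: form_def)
  also have "\<dots> = (\<Sum>i<2*n. u (2*n - 1 - i) * w i)"
    by (rule sum.reindex_bij_witness[where i="\<lambda>i. 2*n - 1 - i" and j="\<lambda>i. 2*n - 1 - i"]) auto
  also have "\<dots> = form n w u" by (simp add: form_def mult.commute)
  finally show ?thesis .
qed

lemma form_ev_right: assumes "j < 2*n" shows "form n v (ev j) = v (2*n - 1 - j)"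
proof -
  have "form n v (ev j) = (\<Sum>i<2*n. if i = 2*n - 1 - j then v i else 0)"
    unfolding form_def by (rule sum.cong) (use assms in auto)
  also have "\<dots> = v (2*n - 1 - j)" using assms by simp
  finally show ?thesis .
qed

lemma form_ev_left: assumes "j < 2*n" shows "form n (ev j) v = v (2*n - 1 - j)"
  using form_ev_right[OF assms] form_sym by metis

lemmas form_simps = form_add_left form_add_right form_diff_left form_diff_right
  form_smult_left form_smult_right

lemma ambient_sub: "VS.subspace (ambient n)"
  by (auto simp: ambient_def VS.subspace_def)

lemma ev_ambient: "i < 2*n \<Longrightarrow> ev i \<in> ambient n"
  by (auto simp: ambient_def)

lemma span_ambient: "B \<subseteq> ambient n \<Longrightarrow> VS.span B \<subseteq> ambient n"
  by (rule VS.span_minimal) (auto simp: ambient_sub)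

lemma span_coord_zero:
  assumes "x \<in> VS.span (ev ` P)" "i \<notin> P" shows "x i = 0"
  using assms(1)
proof (induction rule: VS.span_induct_alt)
  case base then show ?case by simp
next
  case (step c x y)
  then obtain p where "p \<in> P" "x = ev p" by auto
  with step assms(2) show ?case by (auto split: if_splits)
qed

lemma span_form_left:
  assumes "x \<in> VS.span B" "\<And>b. b \<in> B \<Longrightarrow> form n b z = 0" shows "form n x z = 0"
  using assms(1)
proof (induction rule: VS.span_induct_alt)
  case base then show ?case by (simp add: form_def)
next
  case (step c x y)
  have "form n x z = 0" using assms(2) step by auto
  then show ?case using step by (simp only: form_simps) simp
qed

lemma span_form_right:
  assumes "x \<in> VS.span B" "\<And>b. b \<in> B \<Longrightarrow> form n z b = 0" shows "form n z x = 0"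
  using span_form_left[OF assms(1), of n z] assms(2) form_sym by metis

lemma span_isotropic:
  assumes "\<And>b c. b \<in> B \<Longrightarrow> c \<in> B \<Longrightarrow> form n b c = 0"
  shows "isotropic n (VS.span B)"
  unfolding isotropic_def
proof (intro ballI)
  fix v w assume v: "v \<in> VS.span B" and w: "w \<in> VS.span B"
  have "form n b w = 0" if "b \<in> B" for b
    by (rule span_form_right[OF w]) (use assms that in auto)
  then show "form n v w = 0" by (rule span_form_left[OF v])
qed

lemma indep_pivot:
  assumes piv: "\<And>p. p \<in> P \<Longrightarrow> f p p \<noteq> (0::'a::field)"
    and zer: "\<And>p q. p \<in> P \<Longrightarrow> q \<in> P \<Longrightarrow> p \<noteq> q \<Longrightarrow> f q p = 0"
  shows "VS.independent (f ` P)" "inj_on f P"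
proof -
  show inj: "inj_on f P"
  proof (rule inj_onI)
    fix p q assume "p \<in> P" "q \<in> P" "f p = f q"
    then show "p = q" using piv zer by (metis)
  qed
  show "VS.independent (f ` P)"
    unfolding VS.independent_explicit_module
  proof (intro allI impI)
    fix t u v assume t: "finite t" "t \<subseteq> f ` P" and s: "(\<Sum>v\<in>t. vsmult (u v) v) = 0" and v: "v \<in> t"
    obtain p where p: "p \<in> P" "v = f p" using t v by auto
    have "0 = (\<Sum>w\<in>t. vsmult (u w) w) p" using s by simp
    also have "\<dots> = (\<Sum>w\<in>t. u w * w p)" by (simp add: sum_fun_apply)
    also have "\<dots> = u v * v p + (\<Sum>w\<in>t - {v}. u w * w p)"
      using t v by (simp add: sum.remove)
    also have "(\<Sum>w\<in>t - {v}. u w * w p) = 0"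
    proof (rule sum.neutral, intro ballI)
      fix w assume w: "w \<in> t - {v}"
      then obtain q where q: "q \<in> P" "w = f q" using t by auto
      with w p have "q \<noteq> p" by auto
      then show "u w * w p = 0" using zer[OF p(1) q(1)] q by simp
    qed
    finally show "u v = 0" using piv[OF p(1)] p by simp
  qed
qed


lemma dim_span_pivot:
  assumes piv: "\<And>p. p \<in> P \<Longrightarrow> f p p \<noteq> (0::'a::field)"
    and zer: "\<And>p q. p \<in> P \<Longrightarrow> q \<in> P \<Longrightarrow> p \<noteq> q \<Longrightarrow> f q p = 0"
  shows "vdim (VS.span (f ` P)) = card P"
proof -
  have i: "VS.independent (f ` P)" "inj_on f P" using indep_pivot[of P f, OF piv zer] by blast+
  show ?thesis unfolding vdim_def using VS.dim_span_eq_card_independent[OF i(1)] card_image[OF i(2)] by simp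
qed

lemma dim_span_ev: "vdim (VS.span ((ev :: nat \<Rightarrow> 'a::field vec) ` P)) = card P"
  by (rule dim_span_pivot) auto

lemma form_ev_ev: "p < 2*n \<Longrightarrow> q < 2*n \<Longrightarrow> form n (ev p) (ev q :: 'a::field vec) = (if p + q = 2*n - 1 then 1 else 0)"
  by (simp add: form_ev_right) linarith

lemma isotropic_ev:
  assumes "\<And>p. p \<in> P \<Longrightarrow> p < 2*n" "\<And>p q. p \<in> P \<Longrightarrow> q \<in> P \<Longrightarrow> p + q \<noteq> 2*n - 1"
  shows "isotropic n (VS.span ((ev :: nat \<Rightarrow> 'a::field vec) ` P))"
  by (rule span_isotropic) (use assms in \<open>auto simp: form_ev_ev\<close>)

lemma span_ev_ambient: "(\<And>p. p \<in> P \<Longrightarrow> p < 2*n) \<Longrightarrow> VS.span ((ev :: nat \<Rightarrow> 'a::field vec) ` P) \<subseteq> ambient n"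
  by (rule span_ambient) (auto intro: ev_ambient)

lemma orth_amb: "g \<in> orth_group n \<Longrightarrow> x \<in> ambient n \<Longrightarrow> g x \<in> ambient n"
  by (auto simp: orth_group_def bij_betw_def)
lemma orth_inj: "g \<in> orth_group n \<Longrightarrow> inj_on g (ambient n)"
  by (auto simp: orth_group_def bij_betw_def)
lemma orth_add: "g \<in> orth_group n \<Longrightarrow> x \<in> ambient n \<Longrightarrow> y \<in> ambient n \<Longrightarrow> g (x + y) = g x + g y"
  by (auto simp: orth_group_def)
lemma orth_smult: "g \<in> orth_group n \<Longrightarrow> x \<in> ambient n \<Longrightarrow> g (vsmult c x) = vsmult c (g x)"
  by (auto simp: orth_group_def)
lemma orth_form: "g \<in> orth_group n \<Longrightarrow> x \<in> ambient n \<Longrightarrow> y \<in> ambient n \<Longrightarrow> form n (g x) (g y) = form n x y"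
  by (auto simp: orth_group_def)
lemma orth_diff:
  assumes "g \<in> orth_group n" "x \<in> ambient n" "y \<in> ambient n" shows "g (x - y) = g x - g y"
proof -
  have "x - y = x + vsmult (-1) y" by (simp add: fun_eq_iff vsmult_def)
  moreover have "vsmult (-1) y \<in> ambient n" using assms(3) by (auto simp: ambient_def)
  ultimately have "g (x - y) = g x + vsmult (-1) (g y)" using assms orth_add orth_smult by metis
  then show ?thesis by (simp add: fun_eq_iff vsmult_def)
qed
lemma orth_zero: assumes "g \<in> orth_group n" shows "g 0 = 0"
proof -
  have "(0::'a vec) \<in> ambient n" by (simp add: ambient_def)
  then have "g (0 + 0) = g 0 + g 0" using orth_add[OF assms] by blast
  then show ?thesis by simp
qed
lemma id_orth: "id \<in> orth_group n"
  by (auto simp: orth_group_def)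

definition perp :: "nat \<Rightarrow> 'a::field vec set \<Rightarrow> 'a vec set" where
  "perp n X = {v \<in> ambient n. \<forall>x\<in>X. form n v x = 0}"
definition ssum :: "'a::field vec set \<Rightarrow> 'a vec set \<Rightarrow> 'a vec set" where
  "ssum X Y = {x + y | x y. x \<in> X \<and> y \<in> Y}"

lemma perp_ambient: "perp n X \<subseteq> ambient n" by (auto simp: perp_def)

lemma g_ssum: assumes "g \<in> orth_group n" "X \<subseteq> ambient n" "Y \<subseteq> ambient n" "v \<in> ssum X Y"
  shows "g v \<in> ssum (g ` X) (g ` Y)"
proof -
  obtain x y where xy: "v = x + y" "x \<in> X" "y \<in> Y" using assms(4) by (auto simp: ssum_def)
  then have "g v = g x + g y" using orth_add[OF assms(1)] assms(2,3) by blast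
  then show ?thesis using xy by (auto simp: ssum_def)
qed

lemma g_perp: assumes "g \<in> orth_group n" "X \<subseteq> ambient n" "v \<in> perp n X"
  shows "g v \<in> perp n (g ` X)"
  using assms orth_amb[OF assms(1)] orth_form[OF assms(1)] by (auto simp: perp_def)

lemma ssum_mono: "X \<subseteq> X' \<Longrightarrow> Y \<subseteq> Y' \<Longrightarrow> ssum X Y \<subseteq> ssum X' Y'"
  by (auto simp: ssum_def)

lemma ssum_test:
  assumes "v \<in> ssum X Y" "\<And>x. x \<in> X \<Longrightarrow> form n x z = 0" "\<And>y. y \<in> Y \<Longrightarrow> form n y z = 0"
  shows "form n v z = 0"
  using assms by (auto simp: ssum_def form_add_left)

lemma ssum_sub: "VS.subspace S \<Longrightarrow> X \<subseteq> S \<Longrightarrow> Y \<subseteq> S \<Longrightarrow> ssum X Y \<subseteq> S"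
  unfolding ssum_def using VS.subspace_add by blast




definition PU1 :: "nat \<Rightarrow> nat \<Rightarrow> nat set" where
  "PU1 n g1 = insert 0 (insert (2*n-6) {6..<g1+4})"
definition PU2 :: "nat \<Rightarrow> nat \<Rightarrow> nat \<Rightarrow> nat set" where
  "PU2 n g1 g2 = insert 0 (insert 1 (insert (2*n-5) (insert (2*n-6) {6..<g1+g2+2})))"
definition PU3 :: "nat \<Rightarrow> nat set" where
  "PU3 n = insert 0 (insert 1 (insert 2 (insert (2*n-6) (insert (2*n-5) (insert (2*n-4) {6..<n})))))"
definition PL :: "nat \<Rightarrow> nat set" where
  "PL n = insert 3 (insert 4 (insert 5 (insert (2*n-3) (insert (2*n-2) (insert (2*n-1) {n..<2*n-6})))))"
definition PW :: "nat \<Rightarrow> nat \<Rightarrow> nat set" where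
  "PW n b = insert 2 (insert 5 (insert (2*n-2) (insert (2*n-1) {6..<b+2})))"

definition w1 :: "'a::field vec" where "w1 = ev 0 + ev 1 + ev 2 + ev 3 + ev 4"
definition w2 :: "'a::field \<Rightarrow> 'a vec" where "w2 t = ev 0 + ev 4 + ev 5 + vsmult t (ev 1 + ev 3)"
definition w3 :: "nat \<Rightarrow> 'a::field vec" where "w3 n = ev (2*n-1) - ev (2*n-5)"
definition w4 :: "nat \<Rightarrow> 'a::field vec" where "w4 n = ev (2*n-2) - ev (2*n-4)"
definition wb :: "nat \<Rightarrow> 'a::field \<Rightarrow> nat \<Rightarrow> 'a vec" where
  "wb n t p = (if p = 2 then w1 else if p = 5 then w2 t else if p = 2*n-1 then w3 n
     else if p = 2*n-2 then w4 n else ev p)"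

locale cfg =
  fixes m g1 g2 b :: nat
  assumes g1: "2 \<le> g1" and g2: "2 \<le> g2" and g3: "g1 + g2 + 2 \<le> m + 6"
    and b4: "4 \<le> b" and bn: "b + 2 \<le> m + 6"
begin

abbreviation "n \<equiv> m + 6"
lemma n6: "6 \<le> n" by simp

abbreviation "U1 \<equiv> VS.span (ev ` PU1 n g1) :: 'a::field vec set"
abbreviation "U2 \<equiv> VS.span (ev ` PU2 n g1 g2) :: 'a::field vec set"
abbreviation "U3 \<equiv> VS.span (ev ` PU3 n) :: 'a::field vec set"
abbreviation "LL \<equiv> VS.span (ev ` PL n) :: 'a::field vec set"
abbreviation "WW t \<equiv> VS.span (wb n t ` PW n b) :: 'a::field vec set"

lemma card_PU1: "card (PU1 n g1) = g1" using n6 g1 g2 g3 by (simp add: PU1_def card_insert_if)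
lemma card_PU2: "card (PU2 n g1 g2) = g1 + g2" using n6 g1 g2 g3 by (simp add: PU2_def card_insert_if)
lemma card_PU3: "card (PU3 n) = n" using n6 by (simp add: PU3_def card_insert_if)
lemma card_PL: "card (PL n) = n" using n6 by (simp add: PL_def card_insert_if)
lemma card_PW: "card (PW n b) = b" using n6 b4 bn by (simp add: PW_def card_insert_if)

lemma PU12: "PU1 n g1 \<subseteq> PU2 n g1 g2" using g2 by (auto simp: PU1_def PU2_def)
lemma PU23: "PU2 n g1 g2 \<subseteq> PU3 n" using g3 by (auto simp: PU3_def PU2_def)

lemma bnd_PU1: "p \<in> PU1 n g1 \<Longrightarrow> p < 2*n" using n6 g3 by (auto simp: PU1_def)
lemma bnd_PU2: "p \<in> PU2 n g1 g2 \<Longrightarrow> p < 2*n" using n6 g3 by (auto simp: PU2_def)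
lemma bnd_PU3: "p \<in> PU3 n \<Longrightarrow> p < 2*n" using n6 by (auto simp: PU3_def)
lemma bnd_PL: "p \<in> PL n \<Longrightarrow> p < 2*n" using n6 by (auto simp: PL_def)
lemma bnd_PW: "p \<in> PW n b \<Longrightarrow> p < 2*n" using n6 bn by (auto simp: PW_def)

lemma iso_U3: "isotropic n U3"
  by (rule isotropic_ev) (use n6 in \<open>auto simp: PU3_def\<close>)
lemma iso_L: "isotropic n LL"
  by (rule isotropic_ev) (use n6 in \<open>auto simp: PL_def\<close>)


lemma wb_piv: "p \<in> PW n b \<Longrightarrow> wb n t p p = (1::'a::field)"
  using bn by (auto simp: PW_def wb_def w1_def w2_def w3_def w4_def)

lemma wb_zero: "p \<in> PW n b \<Longrightarrow> q \<in> PW n b \<Longrightarrow> p \<noteq> q \<Longrightarrow> wb n t q p = (0::'a::field)"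
  using bn by (auto simp: PW_def wb_def w1_def w2_def w3_def w4_def)

lemma dim_W: "vdim (WW t :: 'a::field vec set) = b"
proof -
  have "vdim (WW t :: 'a::field vec set) = card (PW n b)"
    by (rule dim_span_pivot) (simp_all add: wb_piv wb_zero)
  then show ?thesis using card_PW by simp
qed

lemma wb_amb: "p \<in> PW n b \<Longrightarrow> wb n t p \<in> ambient n"
  using bn by (auto simp: PW_def wb_def w1_def w2_def w3_def w4_def ambient_def)

lemma W_amb: "WW t \<subseteq> ambient n"
  by (rule span_ambient) (use wb_amb in auto)

lemma form_wb: "p \<in> PW n b \<Longrightarrow> q \<in> PW n b \<Longrightarrow> form n (wb n t p) (wb n t q) = (0::'a::field)"
  using bn by (auto simp: PW_def wb_def w1_def w2_def w3_def w4_def form_simps form_ev_ev)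

lemma iso_W: "isotropic n (WW t :: 'a::field vec set)"
  by (rule span_isotropic) (use form_wb in auto)

lemma U1_amb: "U1 \<subseteq> ambient n" by (rule span_ev_ambient) (rule bnd_PU1)
lemma U2_amb: "U2 \<subseteq> ambient n" by (rule span_ev_ambient) (rule bnd_PU2)
lemma U3_amb: "U3 \<subseteq> ambient n" by (rule span_ev_ambient) (rule bnd_PU3)
lemma L_amb: "LL \<subseteq> ambient n" by (rule span_ev_ambient) (rule bnd_PL)

end



lemma form_neg_left: "form n (- u) w = - form n u w"
  by (simp add: form_def sum_negf)
lemma form_neg_right: "form n w (- u) = - form n w u"
  by (simp add: form_def sum_negf)
lemmas fs = form_simps form_neg_left form_neg_right form_ev_ev

context cfg begin

lemmas cf = g1 g2 g3 b4 bn

definition "l1 = (ev 3 + ev 4 :: 'a::field vec)"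
definition "l4 t = (vsmult t (ev 3) + ev 4 + ev 5 :: 'a::field vec)"

definition "D1 t = perp n U1 \<inter> LL \<inter> ssum U3 (WW t)"
definition "D2 t = ssum U3 (WW t) \<inter> ssum (perp n U2 \<inter> LL) (perp n (WW t) \<inter> LL)"
definition "D3 t = LL \<inter> ssum (ssum U1 (WW t)) (U3 \<inter> perp n (WW t))"
definition "D4 t = LL \<inter> ssum U2 (WW t)"

lemma ev_in_span: "p \<in> P \<Longrightarrow> ev p \<in> VS.span (ev ` P)"
  by (rule VS.span_base) auto

lemma wb_in_W: "p \<in> PW n b \<Longrightarrow> wb n t p \<in> WW t"
  by (rule VS.span_base) auto

lemma w1_in_W: "w1 \<in> WW t" using wb_in_W[of 2 t] by (simp add: PW_def wb_def)
lemma w2_in_W: "w2 t \<in> WW t" using wb_in_W[of 5 t] by (simp add: PW_def wb_def)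
lemma w3_in_W: "w3 n \<in> WW t" using wb_in_W[of "2*n-1" t] by (simp add: PW_def wb_def)
lemma w4_in_W: "w4 n \<in> WW t" using wb_in_W[of "2*n-2" t] by (simp add: PW_def wb_def)

lemma l1_L: "l1 \<in> LL"
  unfolding l1_def by (intro VS.span_add ev_in_span) (auto simp: PL_def)
lemma l4_L: "l4 t \<in> LL"
  unfolding l4_def by (intro VS.span_add VS.span_scale ev_in_span) (auto simp: PL_def)

lemma l1_amb: "l1 \<in> ambient n" using l1_L L_amb by blast

lemma lb1: "l1 \<in> D1 t"
proof -
  have "l1 \<in> perp n U1"
    unfolding perp_def
  proof (intro CollectI conjI ballI)
    show "l1 \<in> ambient n" by (rule l1_amb)
    fix x assume "x \<in> U1"
    then show "form n l1 x = 0"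
    proof (rule span_form_right)
      fix y assume "y \<in> ev ` PU1 n g1"
      then obtain p where "p \<in> PU1 n g1" "y = ev p" by auto
      then show "form n l1 y = 0" using cf
        by (auto simp: PU1_def l1_def fs)
    qed
  qed
  moreover have "l1 \<in> ssum U3 (WW t)"
  proof -
    have "0 - ev 0 - ev 1 - ev 2 \<in> U3"
      by (intro VS.span_diff VS.span_zero ev_in_span) (auto simp: PU3_def)
    moreover have "l1 = (0 - ev 0 - ev 1 - ev 2) + w1"
      by (simp add: fun_eq_iff l1_def w1_def)
    ultimately show ?thesis using w1_in_W unfolding ssum_def by blast
  qed
  ultimately show ?thesis using l1_L by (simp add: D1_def)
qed


lemma perp_span_I:
  assumes "z \<in> ambient n" "\<And>p. p \<in> P \<Longrightarrow> form n z (f p) = 0"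
  shows "z \<in> perp n (VS.span (f ` P))"
  unfolding perp_def
proof (intro CollectI conjI ballI)
  show "z \<in> ambient n" by fact
  fix x assume "x \<in> VS.span (f ` P)"
  then show "form n z x = 0" by (rule span_form_right) (use assms(2) in auto)
qed

lemma orth_span:
  assumes "x \<in> VS.span (f ` P)" "\<And>p. p \<in> P \<Longrightarrow> form n (f p) z = 0"
  shows "form n x z = 0"
  by (rule span_form_left[OF assms(1)]) (use assms(2) in auto)

lemma amb_I: "(\<And>i. 2*n \<le> i \<Longrightarrow> v i = 0) \<Longrightarrow> v \<in> ambient n"
  by (auto simp: ambient_def)

lemma lb4: "l4 t \<in> D4 t"
proof -
  have "0 - ev 0 - vsmult t (ev 1) \<in> U2"
    by (intro VS.span_diff VS.span_scale VS.span_zero ev_in_span) (auto simp: PU2_def)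
  moreover have "l4 t = (0 - ev 0 - vsmult t (ev 1)) + w2 t"
    by (simp add: fun_eq_iff l4_def w2_def)
  ultimately have "l4 t \<in> ssum U2 (WW t)" using w2_in_W unfolding ssum_def by blast
  then show ?thesis using l4_L by (simp add: D4_def)
qed

lemma lb2: "l4 t - l1 \<in> D2 t"
proof -
  have a: "ev 2 + vsmult (1 - t) (ev 1) \<in> U3"
    by (intro VS.span_add VS.span_scale ev_in_span) (auto simp: PU3_def)
  have b: "w2 t - w1 \<in> WW t" by (intro VS.span_diff w1_in_W w2_in_W)
  have "l4 t - l1 = (ev 2 + vsmult (1 - t) (ev 1)) + (w2 t - w1)"
    by (simp add: fun_eq_iff l4_def l1_def w1_def w2_def algebra_simps)
  then have 1: "l4 t - l1 \<in> ssum U3 (WW t)" using a b unfolding ssum_def by blast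
  have c: "vsmult (t - 1) (ev 3) \<in> perp n U2 \<inter> LL"
  proof
    show "vsmult (t - 1) (ev 3) \<in> LL"
      by (intro VS.span_scale ev_in_span) (auto simp: PL_def)
    show "vsmult (t - 1) (ev 3) \<in> perp n U2"
      by (rule perp_span_I) (use cf in \<open>auto simp: PU2_def ambient_def fs\<close>)
  qed
  have d: "ev 5 \<in> perp n (WW t) \<inter> LL"
  proof
    show "ev 5 \<in> LL" by (rule ev_in_span) (auto simp: PL_def)
    show "ev 5 \<in> perp n (WW t)"
      by (rule perp_span_I) (use cf in \<open>auto simp: PW_def wb_def w1_def w2_def w3_def w4_def ambient_def fs\<close>)
  qed
  have "l4 t - l1 = vsmult (t - 1) (ev 3) + ev 5"
    by (simp add: fun_eq_iff l4_def l1_def algebra_simps)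
  then have 2: "l4 t - l1 \<in> ssum (perp n U2 \<inter> LL) (perp n (WW t) \<inter> LL)"
    using c d unfolding ssum_def by blast
  show ?thesis using 1 2 by (simp add: D2_def)
qed

lemma lb3: "vsmult t l1 - l4 t \<in> D3 t"
proof -
  have a: "vsmult (1 - t) (ev 0) \<in> U1"
    by (intro VS.span_scale ev_in_span) (auto simp: PU1_def)
  have b: "vsmult t w1 - w2 t \<in> WW t" by (intro VS.span_diff VS.span_scale w1_in_W w2_in_W)
  have c: "vsmult (- t) (ev 2) \<in> U3 \<inter> perp n (WW t)"
  proof
    show "vsmult (- t) (ev 2) \<in> U3"
      by (intro VS.span_scale ev_in_span) (auto simp: PU3_def)
    show "vsmult (- t) (ev 2) \<in> perp n (WW t)"
      by (rule perp_span_I) (use cf in \<open>auto simp: PW_def wb_def w1_def w2_def w3_def w4_def ambient_def fs\<close>)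
  qed
  have "vsmult t l1 - l4 t = (vsmult (1 - t) (ev 0) + (vsmult t w1 - w2 t)) + vsmult (- t) (ev 2)"
    by (simp add: fun_eq_iff l4_def l1_def w1_def w2_def algebra_simps)
  then have "vsmult t l1 - l4 t \<in> ssum (ssum U1 (WW t)) (U3 \<inter> perp n (WW t))"
    using a b c unfolding ssum_def by blast
  moreover have "vsmult t l1 - l4 t \<in> LL" by (intro VS.span_diff VS.span_scale l1_L l4_L)
  ultimately show ?thesis by (simp add: D3_def)
qed


lemma L_rest:
  assumes "v \<in> LL" "\<And>j. 6 \<le> j \<Longrightarrow> j < n \<Longrightarrow> v (2*n-1-j) = 0"
    "i \<notin> {3,4,5,2*n-3,2*n-2,2*n-1}"
  shows "v i = 0"
proof (cases "i \<in> PL n")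
  case True
  then have "n \<le> i" "i < 2*n-6" using assms(3) by (auto simp: PL_def)
  then have "v (2*n-1-(2*n-1-i)) = 0" using assms(2)[of "2*n-1-i"] by simp
  then show ?thesis using \<open>i < 2*n-6\<close> by simp
next
  case False
  then show ?thesis using span_coord_zero assms(1) by blast
qed

lemma L_zero: "v \<in> LL \<Longrightarrow> i \<notin> PL n \<Longrightarrow> v i = 0"
  using span_coord_zero by blast

lemma ub4:
  assumes "v \<in> D4 s"
  shows "\<exists>a c. v = vsmult a (l4 s) + vsmult c (ev (2*n-1))"
proof -
  from assms have vL: "v \<in> LL" and vs: "v \<in> ssum U2 (WW s)" by (auto simp: D4_def)
  have T: "form n v z = 0" if h1: "\<And>p. p \<in> PU2 n g1 g2 \<Longrightarrow> form n (ev p) z = 0"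
      and h2: "\<And>p. p \<in> PW n b \<Longrightarrow> form n (wb n s p) z = 0" for z
    by (rule ssum_test[OF vs]) (erule orth_span, erule h1 h2)+
  have pad: "v (2*n-1-j) = 0" if "6 \<le> j" "j < n" for j
  proof -
    have "form n v (ev j) = 0"
      by (rule T) (use that cf in \<open>auto simp: PU2_def PW_def wb_def w1_def w2_def w3_def w4_def fs\<close>)
    then show ?thesis using that by (simp add: form_ev_right)
  qed
  have e2: "v (2*n-3) = 0"
  proof -
    have "form n v (ev 2) = 0"
      by (rule T) (use cf in \<open>auto simp: PU2_def PW_def wb_def w1_def w2_def w3_def w4_def fs\<close>)
    then show ?thesis by (simp add: form_ev_right)
  qed
  have e13: "v (2*n-2) = 0"
  proof -
    have "form n v (ev 1 + ev 3) = 0"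
      by (rule T) (use cf in \<open>auto simp: PU2_def PW_def wb_def w1_def w2_def w3_def w4_def fs\<close>)
    moreover have "v (2*n-4) = 0" by (rule L_zero[OF vL]) (simp add: PL_def)
    ultimately show ?thesis by (simp add: form_simps form_ev_right)
  qed
  have v2: "v 2 = 0" by (rule L_zero[OF vL]) (simp add: PL_def)
  have eA: "v 3 = s * v 5"
  proof -
    have "form n v (ev (2*n-4) - ev (2*n-3) - vsmult s (ev (2*n-6))) = 0"
      by (rule T) (use cf in \<open>auto simp: PU2_def PW_def wb_def w1_def w2_def w3_def w4_def fs\<close>)
    then show ?thesis using v2 by (simp add: form_simps form_ev_right)
  qed
  have eB: "v 4 = v 5"
  proof -
    have "form n v (ev (2*n-5) - ev (2*n-3) - ev (2*n-6)) = 0"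
      by (rule T) (use cf in \<open>auto simp: PU2_def PW_def wb_def w1_def w2_def w3_def w4_def fs\<close>)
    then show ?thesis using v2 by (simp add: form_simps form_ev_right)
  qed
  have "v = vsmult (v 5) (l4 s) + vsmult (v (2*n-1)) (ev (2*n-1))"
  proof (rule ext)
    fix i
    show "v i = (vsmult (v 5) (l4 s) + vsmult (v (2*n-1)) (ev (2*n-1))) i"
    proof (cases "i \<in> {3,4,5,2*n-3,2*n-2,2*n-1}")
      case True
      then show ?thesis using e2 e13 eA eB by (auto simp: l4_def)
    next
      case False
      then have "v i = 0" using L_rest[of v i] vL pad by blast
      then show ?thesis using False by (auto simp: l4_def)
    qed
  qed
  then show ?thesis by blast
qed


lemma U3W_test:
  assumes "v \<in> ssum U3 (WW s)" "\<And>p. p \<in> PU3 n \<Longrightarrow> form n (ev p) z = 0"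
      "\<And>p. p \<in> PW n b \<Longrightarrow> form n (wb n s p) z = 0"
  shows "form n v z = 0"
  by (rule ssum_test[OF assms(1)]) (erule orth_span, erule assms(2,3))+

lemma U3W_pad: "v \<in> ssum U3 (WW s) \<Longrightarrow> 6 \<le> j \<Longrightarrow> j < n \<Longrightarrow> v (2*n-1-j) = 0"
proof -
  assume a: "v \<in> ssum U3 (WW s)" "6 \<le> j" "j < n"
  have "form n v (ev j) = 0"
    by (rule U3W_test[OF a(1)]) (use a cf in \<open>auto simp: PU3_def PW_def wb_def w1_def w2_def w3_def w4_def fs\<close>)
  then show ?thesis using a by (simp add: form_ev_right)
qed

lemma U3W_2: "v \<in> ssum U3 (WW s) \<Longrightarrow> v (2*n-3) = 0"
proof -
  assume a: "v \<in> ssum U3 (WW s)"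
  have "form n v (ev 2) = 0"
    by (rule U3W_test[OF a(1)]) (use a cf in \<open>auto simp: PU3_def PW_def wb_def w1_def w2_def w3_def w4_def fs\<close>)
  then show ?thesis by (simp add: form_ev_right)
qed

lemma U3W_5: "v \<in> ssum U3 (WW s) \<Longrightarrow> v 3 - v 4 + (1 - s) * v 5 = 0"
proof -
  assume a: "v \<in> ssum U3 (WW s)"
  have "form n v (ev (2*n-4) - ev (2*n-5) + vsmult (1 - s) (ev (2*n-6))) = 0"
    by (rule U3W_test[OF a(1)]) (use a cf in \<open>auto simp: PU3_def PW_def wb_def w1_def w2_def w3_def w4_def fs\<close>)
  then show ?thesis by (simp add: form_simps form_ev_right)
qed

lemma perp_form: "v \<in> perp n X \<Longrightarrow> x \<in> X \<Longrightarrow> form n v x = 0"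
  by (auto simp: perp_def)

lemma ub1:
  assumes "v \<in> D1 s"
  shows "\<exists>a c. v = vsmult a l1 + vsmult c (ev (2*n-2))"
proof -
  from assms have vL: "v \<in> LL" and vs: "v \<in> ssum U3 (WW s)" and vp: "v \<in> perp n U1"
    by (auto simp: D1_def)
  have pad: "v (2*n-1-j) = 0" if "6 \<le> j" "j < n" for j using U3W_pad[OF vs that] .
  have e2: "v (2*n-3) = 0" by (rule U3W_2[OF vs])
  have e5: "v 3 - v 4 + (1 - s) * v 5 = 0" by (rule U3W_5[OF vs])
  have x0: "v (2*n-1) = 0"
  proof -
    have "form n v (ev 0) = 0" by (rule perp_form[OF vp]) (rule ev_in_span, simp add: PU1_def)
    then show ?thesis by (simp add: form_ev_right)
  qed
  have c0: "v 5 = 0"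
  proof -
    have "form n v (ev (2*n-6)) = 0" by (rule perp_form[OF vp]) (rule ev_in_span, simp add: PU1_def)
    then show ?thesis by (simp add: form_ev_right)
  qed
  have "v = vsmult (v 3) l1 + vsmult (v (2*n-2)) (ev (2*n-2))"
  proof (rule ext)
    fix i
    show "v i = (vsmult (v 3) l1 + vsmult (v (2*n-2)) (ev (2*n-2))) i"
    proof (cases "i \<in> {3,4,5,2*n-3,2*n-2,2*n-1}")
      case True
      then show ?thesis using e2 e5 x0 c0 by (auto simp: l1_def)
    next
      case False
      then have "v i = 0" using L_rest[of v i] vL pad by blast
      then show ?thesis using False by (auto simp: l1_def)
    qed
  qed
  then show ?thesis by blast
qed

lemma L_sub: "VS.subspace LL" by simp

lemma ub2:
  assumes "v \<in> D2 s"
  shows "\<exists>a c. v = vsmult a (l4 s - l1) + vsmult c (vsmult s (ev (2*n-1)) - ev (2*n-2))"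
proof -
  from assms have vs: "v \<in> ssum U3 (WW s)" and vt: "v \<in> ssum (perp n U2 \<inter> LL) (perp n (WW s) \<inter> LL)"
    by (auto simp: D2_def)
  have vL: "v \<in> LL" using ssum_sub[OF L_sub, of "perp n U2 \<inter> LL" "perp n (WW s) \<inter> LL"] vt by blast
  have pad: "v (2*n-1-j) = 0" if "6 \<le> j" "j < n" for j using U3W_pad[OF vs that] .
  have e2: "v (2*n-3) = 0" by (rule U3W_2[OF vs])
  have e5: "v 3 - v 4 + (1 - s) * v 5 = 0" by (rule U3W_5[OF vs])
  have isoL: "form n x y = 0" if "x \<in> LL" "y \<in> LL" for x y :: "'a::field vec" using iso_L that by (auto simp: isotropic_def)
  have T: "form n v z = 0" if h1: "z \<in> U2" and h2: "z = w - l" and h3: "w \<in> WW s" and h4: "l \<in> LL" for z w l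
  proof (rule ssum_test[OF vt])
    fix x :: "'a vec" assume "x \<in> perp n U2 \<inter> LL"
    then show "form n x z = 0" using perp_form h1 by blast
  next
    fix x :: "'a vec" assume x: "x \<in> perp n (WW s) \<inter> LL"
    then have "form n x w = 0" using perp_form h3 by blast
    moreover have "form n x l = 0" using isoL x h4 by blast
    ultimately show "form n x z = 0" using h2 by (simp add: form_simps)
  qed
  have eC: "v (2*n-1) + s * v (2*n-2) = 0"
  proof -
    have "form n v (ev 0 + vsmult s (ev 1)) = 0"
    proof (rule T)
      show "ev 0 + vsmult s (ev 1) \<in> U2"
        by (intro VS.span_add VS.span_scale ev_in_span) (auto simp: PU2_def)
      show "ev 0 + vsmult s (ev 1) = w2 s - l4 s" by (simp add: fun_eq_iff w2_def l4_def)
    qed (rule w2_in_W, rule l4_L)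
    then show ?thesis by (simp add: form_simps form_ev_right)
  qed
  have eD: "v 4 = 0"
  proof -
    have "form n v (ev (2*n-5)) = 0"
    proof (rule T)
      show "ev (2*n-5) \<in> U2" by (rule ev_in_span) (auto simp: PU2_def)
      show "ev (2*n-5) = (0 - w3 n) - (0 - ev (2*n-1))" by (simp add: fun_eq_iff w3_def)
      show "0 - w3 n \<in> WW s" by (intro VS.span_diff VS.span_zero w3_in_W)
      show "0 - ev (2*n-1) \<in> LL" by (intro VS.span_diff VS.span_zero ev_in_span) (simp add: PL_def)
    qed
    then show ?thesis by (simp add: form_ev_right)
  qed
  have "v = vsmult (v 5) (l4 s - l1) + vsmult (- v (2*n-2)) (vsmult s (ev (2*n-1)) - ev (2*n-2))"
  proof (rule ext)
    fix i
    show "v i = (vsmult (v 5) (l4 s - l1) + vsmult (- v (2*n-2)) (vsmult s (ev (2*n-1)) - ev (2*n-2))) i"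
    proof (cases "i \<in> {3,4,5,2*n-3,2*n-2,2*n-1}")
      case True
      then show ?thesis using e2 e5 eC eD by (auto simp: l1_def l4_def algebra_simps)
    next
      case False
      then have "v i = 0" using L_rest[of v i] vL pad by blast
      then show ?thesis using False by (auto simp: l1_def l4_def)
    qed
  qed
  then show ?thesis by blast
qed

lemma ub3:
  assumes "v \<in> D3 s"
  shows "\<exists>a c. v = vsmult a (vsmult s l1 - l4 s) + vsmult c (ev (2*n-1) - ev (2*n-2))"
proof -
  from assms have vL: "v \<in> LL" and vt: "v \<in> ssum (ssum U1 (WW s)) (U3 \<inter> perp n (WW s))"
    by (auto simp: D3_def)
  have isoU3: "form n x y = 0" if "x \<in> U3" "y \<in> U3" for x y :: "'a::field vec" using iso_U3 that by (auto simp: isotropic_def)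
  have T: "form n v z = 0" if h1: "\<And>p. p \<in> PU1 n g1 \<Longrightarrow> form n (ev p) z = 0"
     and h2: "\<And>p. p \<in> PW n b \<Longrightarrow> form n (wb n s p) z = 0"
     and h3: "z = u + w" and h4: "u \<in> U3" and h5: "w \<in> WW s" for z u w
  proof (rule ssum_test[OF vt])
    fix x assume "x \<in> ssum U1 (WW s)"
    then show "form n x z = 0" by (rule ssum_test) (erule orth_span, erule h1 h2)+
  next
    fix x assume x: "x \<in> U3 \<inter> perp n (WW s)"
    then have "form n x w = 0" using perp_form h5 by blast
    moreover have "form n x u = 0" using isoU3 x h4 by blast
    ultimately show "form n x z = 0" using h3 by (simp add: form_simps)
  qed
  have pad: "v (2*n-1-j) = 0" if "6 \<le> j" "j < n" for j
  proof -
    have "form n v (ev j) = 0"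
    proof (rule T)
      show "ev j = ev j + 0" by simp
      show "ev j \<in> U3" by (rule ev_in_span) (use that in \<open>auto simp: PU3_def\<close>)
      show "0 \<in> WW s" by (rule VS.span_zero)
    qed (use that cf in \<open>auto simp: PU1_def PW_def wb_def w1_def w2_def w3_def w4_def fs\<close>)
    then show ?thesis using that by (simp add: form_ev_right)
  qed
  have e2: "v (2*n-3) = 0"
  proof -
    have "form n v (ev 2) = 0"
    proof (rule T)
      show "ev 2 = ev 2 + 0" by simp
      show "ev 2 \<in> U3" by (rule ev_in_span) (auto simp: PU3_def)
      show "0 \<in> WW s" by (rule VS.span_zero)
    qed (use cf in \<open>auto simp: PU1_def PW_def wb_def w1_def w2_def w3_def w4_def fs\<close>)
    then show ?thesis by (simp add: form_ev_right)
  qed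
  have eD: "v (2*n-1) + v (2*n-2) = 0"
  proof -
    have "form n v (ev 0 + ev 1 + ev 3 + ev 4) = 0"
    proof (rule T)
      show "ev 0 + ev 1 + ev 3 + ev 4 = (0 - ev 2) + w1" by (simp add: fun_eq_iff w1_def)
      show "0 - ev 2 \<in> U3" by (intro VS.span_diff VS.span_zero ev_in_span) (auto simp: PU3_def)
    qed (use cf w1_in_W in \<open>auto simp: PU1_def PW_def wb_def w1_def w2_def w3_def w4_def fs\<close>)
    moreover have "v (2*n-4) = 0" "v (2*n-5) = 0" by (rule L_zero[OF vL], simp add: PL_def)+
    ultimately show ?thesis by (simp add: form_simps form_ev_right)
  qed
  have eE: "v 3 = 0"
  proof -
    have "form n v (w4 n) = 0"
    proof (rule T)
      show "w4 n = 0 + w4 n" by simp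
      show "0 \<in> U3" by (rule VS.span_zero)
    qed (use cf w4_in_W in \<open>auto simp: PU1_def PW_def wb_def w1_def w2_def w3_def w4_def fs\<close>)
    moreover have "v 1 = 0" by (rule L_zero[OF vL]) (simp add: PL_def)
    ultimately show ?thesis by (simp add: w4_def form_simps form_ev_right)
  qed
  have eF: "v 4 + (s - 1) * v 5 = 0"
  proof -
    have "form n v (ev (2*n-5) - ev (2*n-2) + vsmult (s - 1) (ev (2*n-6))) = 0"
    proof (rule T)
      show "ev (2*n-5) - ev (2*n-2) + vsmult (s - 1) (ev (2*n-6))
          = (ev (2*n-5) - ev (2*n-4) + vsmult (s - 1) (ev (2*n-6))) + (0 - w4 n)"
        by (simp add: fun_eq_iff w4_def)
      show "ev (2*n-5) - ev (2*n-4) + vsmult (s - 1) (ev (2*n-6)) \<in> U3"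
        by (intro VS.span_add VS.span_diff VS.span_scale ev_in_span) (auto simp: PU3_def)
      show "0 - w4 n \<in> WW s" by (intro VS.span_diff VS.span_zero w4_in_W)
    qed (use cf in \<open>auto simp: PU1_def PW_def wb_def w1_def w2_def w3_def w4_def fs\<close>)
    moreover have "v 1 = 0" by (rule L_zero[OF vL]) (simp add: PL_def)
    ultimately show ?thesis by (simp add: form_simps form_ev_right)
  qed
  have "v = vsmult (- v 5) (vsmult s l1 - l4 s) + vsmult (v (2*n-1)) (ev (2*n-1) - ev (2*n-2))"
  proof (rule ext)
    fix i
    show "v i = (vsmult (- v 5) (vsmult s l1 - l4 s) + vsmult (v (2*n-1)) (ev (2*n-1) - ev (2*n-2))) i"
    proof (cases "i \<in> {3,4,5,2*n-3,2*n-2,2*n-1}")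
      case True
      then show ?thesis using e2 eD eE eF by (auto simp: l1_def l4_def algebra_simps)
    next
      case False
      then have "v i = 0" using L_rest[of v i] vL pad by blast
      then show ?thesis using False by (auto simp: l1_def l4_def)
    qed
  qed
  then show ?thesis by blast
qed

end



context cfg begin

lemma U_amb': "U1 \<subseteq> ambient n" "U2 \<subseteq> ambient n" "U3 \<subseteq> ambient n" "LL \<subseteq> ambient n" "WW t \<subseteq> ambient n"
  using U1_amb U2_amb U3_amb L_amb W_amb by blast+

lemma g_int: "g ` (A \<inter> B) \<subseteq> g ` A \<inter> g ` B" by blast

lemma equiv:
  fixes g :: "'a::field vec \<Rightarrow> 'a vec"
  assumes g: "g \<in> orth_group n" and gL: "g ` LL = LL" and gU1: "g ` U1 = U1" and gU2: "g ` U2 = U2"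
    and gU3: "g ` U3 = U3" and gW: "g ` WW t = WW s"
  shows "x \<in> D1 t \<Longrightarrow> g x \<in> D1 s" "x \<in> D2 t \<Longrightarrow> g x \<in> D2 s"
    "x \<in> D3 t \<Longrightarrow> g x \<in> D3 s" "x \<in> D4 t \<Longrightarrow> g x \<in> D4 s"
proof -
  have pU1: "g ` perp n U1 \<subseteq> perp n U1" using g_perp[OF g U1_amb] gU1 by auto
  have pU2: "g ` perp n U2 \<subseteq> perp n U2" using g_perp[OF g U2_amb] gU2 by auto
  have pW: "g ` perp n (WW t) \<subseteq> perp n (WW s)" using g_perp[OF g W_amb[of t]] gW by auto
  have sUW: "g ` ssum U3 (WW t) \<subseteq> ssum U3 (WW s)" using g_ssum[OF g U3_amb W_amb[of t]] gU3 gW by auto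
  have sU2W: "g ` ssum U2 (WW t) \<subseteq> ssum U2 (WW s)" using g_ssum[OF g U2_amb W_amb[of t]] gU2 gW by auto
  have sU1W: "g ` ssum U1 (WW t) \<subseteq> ssum U1 (WW s)" using g_ssum[OF g U1_amb W_amb[of t]] gU1 gW by auto
  have amb: "VS.subspace (ambient n)" by (rule ambient_sub)
  show "x \<in> D1 t \<Longrightarrow> g x \<in> D1 s"
    using pU1 gL sUW unfolding D1_def by blast
  show "x \<in> D4 t \<Longrightarrow> g x \<in> D4 s"
    using gL sU2W unfolding D4_def by blast
  show "x \<in> D2 t \<Longrightarrow> g x \<in> D2 s"
  proof -
    assume x: "x \<in> D2 t"
    have a: "perp n U2 \<inter> LL \<subseteq> ambient n" "perp n (WW t) \<inter> LL \<subseteq> ambient n"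
      using perp_ambient by blast+
    have "g x \<in> ssum (g ` (perp n U2 \<inter> LL)) (g ` (perp n (WW t) \<inter> LL))"
      using g_ssum[OF g a] x unfolding D2_def by blast
    moreover have "g ` (perp n U2 \<inter> LL) \<subseteq> perp n U2 \<inter> LL" using pU2 gL by blast
    moreover have "g ` (perp n (WW t) \<inter> LL) \<subseteq> perp n (WW s) \<inter> LL" using pW gL by blast
    ultimately have "g x \<in> ssum (perp n U2 \<inter> LL) (perp n (WW s) \<inter> LL)"
      using ssum_mono[of "g ` (perp n U2 \<inter> LL)" "perp n U2 \<inter> LL" "g ` (perp n (WW t) \<inter> LL)" "perp n (WW s) \<inter> LL"]
      by (meson subsetD)
    then show ?thesis using sUW x unfolding D2_def by blast
  qed
  show "x \<in> D3 t \<Longrightarrow> g x \<in> D3 s"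
  proof -
    assume x: "x \<in> D3 t"
    have a: "ssum U1 (WW t) \<subseteq> ambient n" "U3 \<inter> perp n (WW t) \<subseteq> ambient n"
      using ssum_sub[OF amb U1_amb W_amb[of t]] U3_amb by blast+
    have "g x \<in> ssum (g ` ssum U1 (WW t)) (g ` (U3 \<inter> perp n (WW t)))"
      using g_ssum[OF g a] x unfolding D3_def by blast
    moreover have "g ` (U3 \<inter> perp n (WW t)) \<subseteq> U3 \<inter> perp n (WW s)" using pW gU3 by blast
    ultimately have "g x \<in> ssum (ssum U1 (WW s)) (U3 \<inter> perp n (WW s))"
      using ssum_mono[OF sU1W, of "g ` (U3 \<inter> perp n (WW t))" "U3 \<inter> perp n (WW s)"] by (meson subsetD)
    then show ?thesis using gL x unfolding D3_def by blast
  qed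
qed

lemma key:
  fixes g :: "'a::field vec \<Rightarrow> 'a vec"
  assumes g: "g \<in> orth_group n" and gL: "g ` LL = LL" and gU1: "g ` U1 = U1" and gU2: "g ` U2 = U2"
    and gU3: "g ` U3 = U3" and gW: "g ` WW t = WW s"
  shows "t = s"
proof (rule ccontr)
  assume ts: "t \<noteq> s"
  note E = equiv[OF assms]
  obtain a1 b1 where A1: "g l1 = vsmult a1 l1 + vsmult b1 (ev (2*n-2))"
    using ub1[OF E(1)[OF lb1]] by blast
  obtain a4 b4 where A4: "g (l4 t) = vsmult a4 (l4 s) + vsmult b4 (ev (2*n-1))"
    using ub4[OF E(4)[OF lb4]] by blast
  obtain a2 b2 where A2: "g (l4 t - l1) = vsmult a2 (l4 s - l1) + vsmult b2 (vsmult s (ev (2*n-1)) - ev (2*n-2))"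
    using ub2[OF E(2)[OF lb2]] by blast
  obtain a3 b3 where A3: "g (vsmult t l1 - l4 t) = vsmult a3 (vsmult s l1 - l4 s) + vsmult b3 (ev (2*n-1) - ev (2*n-2))"
    using ub3[OF E(3)[OF lb3]] by blast
  have l1a: "l1 \<in> ambient n" and l4a: "l4 t \<in> ambient n" and l1b: "vsmult t l1 \<in> ambient n"
    using l1_L l4_L L_amb VS.span_scale[OF l1_L] by blast+
  have B2: "g (l4 t) - g l1 = vsmult a2 (l4 s - l1) + vsmult b2 (vsmult s (ev (2*n-1)) - ev (2*n-2))"
    using A2 orth_diff[OF g l4a l1a] by simp
  have B3: "vsmult t (g l1) - g (l4 t) = vsmult a3 (vsmult s l1 - l4 s) + vsmult b3 (ev (2*n-1) - ev (2*n-2))"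
    using A3 orth_diff[OF g l1b l4a] orth_smult[OF g l1a] by simp
  note B2' = B2[unfolded A1 A4]
  note B3' = B3[unfolded A1 A4]
  have c24: "a4 - a1 = 0" using fun_cong[OF B2', of 4] by (simp add: l1_def l4_def)
  have c2n1: "b4 = b2 * s" using fun_cong[OF B2', of "2*n-1"] by (simp add: l1_def l4_def)
  have c2n2: "- b1 = - b2" using fun_cong[OF B2', of "2*n-2"] by (simp add: l1_def l4_def)
  have c33: "t * a1 - a4 * s = 0" using fun_cong[OF B3', of 3] by (simp add: l1_def l4_def algebra_simps)
  have c3n2: "t * b1 = - b3" using fun_cong[OF B3', of "2*n-2"] by (simp add: l1_def l4_def)
  have c3n1: "- b4 = b3" using fun_cong[OF B3', of "2*n-1"] by (simp add: l1_def l4_def)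
  have "(t - s) * a1 = 0" using c24 c33 by (simp add: algebra_simps)
  then have "a1 = 0" using ts by simp
  have tb: "t * b1 = b4" using c3n2 c3n1[symmetric] by simp
  have sb: "s * b1 = b4" using c2n1 c2n2 by (simp add: mult.commute)
  have "(t - s) * b1 = 0" using tb sb by (simp add: algebra_simps)
  then have "b1 = 0" using ts by simp
  have "g l1 = 0" using A1 \<open>a1 = 0\<close> \<open>b1 = 0\<close> by (simp add: fun_eq_iff)
  also have "\<dots> = g 0" using orth_zero[OF g] by simp
  finally have gg: "g l1 = g 0" .
  have z0: "(0::'a vec) \<in> ambient n" unfolding ambient_def by simp
  have "(l1::'a vec) = 0" by (rule inj_onD[OF orth_inj[OF g] gg l1a z0])
  then have "(l1::'a vec) 3 = 0" by simp
  then show False by (simp add: l1_def)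
qed


end



lemma flags3I:
  assumes "subsp A" "subsp B" "subsp C" "A \<subseteq> ambient n" "B \<subseteq> ambient n" "C \<subseteq> ambient n"
    "vdim A = x" "vdim B = x + y" "vdim C = x + y + z" "A \<subseteq> B" "B \<subseteq> C" "isotropic n C"
  shows "[A, B, C] \<in> flags n [x, y, z]"
  unfolding flags_def mem_Collect_eq
proof (intro conjI)
  show "\<forall>j<length [x, y, z]. subsp ([A, B, C] ! j) \<and> [A, B, C] ! j \<subseteq> ambient n
      \<and> vdim ([A, B, C] ! j) = sum_list (take (Suc j) [x, y, z])"
  proof (intro allI impI)
    fix j assume "j < length [x, y, z]"
    then have "j = 0 \<or> j = 1 \<or> j = 2" by auto
    then show "subsp ([A, B, C] ! j) \<and> [A, B, C] ! j \<subseteq> ambient n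
      \<and> vdim ([A, B, C] ! j) = sum_list (take (Suc j) [x, y, z])"
      using assms by (elim disjE) simp_all
  qed
  show "\<forall>j. Suc j < length [x, y, z] \<longrightarrow> [A, B, C] ! j \<subseteq> [A, B, C] ! Suc j"
  proof (intro allI impI)
    fix j assume "Suc j < length [x, y, z]"
    then have "j = 0 \<or> j = 1" by auto
    then show "[A, B, C] ! j \<subseteq> [A, B, C] ! Suc j" using assms by (elim disjE) simp_all
  qed
qed (use assms in simp_all)

context cfg begin

definition "trip t = ([LL], [WW t], [U1, U2, U3])"

lemma trip_in: "(trip t :: 'a::field vec set list \<times> 'a vec set list \<times> 'a vec set list)
    \<in> triples n [n] [b] [g1, g2, n - g1 - g2]"
proof -
  have s: "subsp (VS.span X)" for X :: "'a vec set" by (simp add: subsp_def)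
  have dU1: "vdim (U1 :: 'a vec set) = g1" using dim_span_ev card_PU1 by metis
  have dU2: "vdim (U2 :: 'a vec set) = g1 + g2" using dim_span_ev card_PU2 by metis
  have dU3: "vdim (U3 :: 'a vec set) = n" using dim_span_ev card_PU3 by metis
  have dL: "vdim (LL :: 'a vec set) = n" using dim_span_ev card_PL by metis
  have f1: "[LL :: 'a vec set] \<in> flags n [n]"
    unfolding flags_def using s[of "ev ` PL n"] L_amb dL iso_L by simp
  have f2: "[WW t :: 'a vec set] \<in> flags n [b]"
    unfolding flags_def using s[of "wb n t ` PW n b"] W_amb[of t] dim_W[of t] iso_W[of t] by simp
  have j3: "j < 3 \<longleftrightarrow> j = 0 \<or> j = 1 \<or> j = 2" for j :: nat by auto
  have sub12: "(U1 :: 'a vec set) \<subseteq> U2" by (rule VS.span_mono) (use PU12 in blast)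
  have sub23: "(U2 :: 'a vec set) \<subseteq> U3" by (rule VS.span_mono) (use PU23 in blast)
  have f3: "[U1, U2, U3 :: 'a vec set] \<in> flags n [g1, g2, n - g1 - g2]"
    by (rule flags3I) (use s U1_amb U2_amb U3_amb dU1 dU2 dU3 iso_U3 sub12 sub23 cf in auto)
  show ?thesis using f1 f2 f3 by (simp add: triples_def trip_def)
qed

lemma io_refl: "((trip t, trip t) :: ('a::field vec set list \<times> 'a vec set list \<times> 'a vec set list) \<times> _) \<in> orbit_rel n [n] [b] [g1, g2, n - g1 - g2]"
proof -
  have "(trip t :: 'a vec set list \<times> 'a vec set list \<times> 'a vec set list) \<in> triples n [n] [b] [g1, g2, n - g1 - g2]"
    by (rule trip_in)
  moreover have "act_flag id xs = xs" for xs :: "'a vec set list" by (simp add: act_flag_def)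
  ultimately show ?thesis using id_orth unfolding orbit_rel_def trip_def by fastforce
qed

lemma io_key:
  assumes "((trip t, trip s) :: ('a::field vec set list \<times> 'a vec set list \<times> 'a vec set list) \<times> _) \<in> orbit_rel n [n] [b] [g1, g2, n - g1 - g2]"
  shows "t = s"
proof -
  have "\<exists>g\<in>orth_group n. act_flag g [LL] = [LL :: 'a vec set] \<and> act_flag g [WW t] = [WW s :: 'a vec set]
         \<and> act_flag g [U1, U2, U3] = [U1, U2, U3 :: 'a vec set]"
    using assms unfolding orbit_rel_def trip_def by simp
  then obtain g where g: "g \<in> orth_group n" and
      e: "act_flag g [LL] = [LL :: 'a vec set]" "act_flag g [WW t] = [WW s :: 'a vec set]"
         "act_flag g [U1, U2, U3] = [U1, U2, U3 :: 'a vec set]"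
    by blast
  have e1: "g ` LL = LL" using e(1) by (simp add: act_flag_def)
  have e2: "g ` WW t = WW s" using e(2) by (simp add: act_flag_def)
  have e3: "g ` U1 = U1" "g ` U2 = U2" "g ` U3 = U3" using e(3) by (simp_all add: act_flag_def)
  show "t = s" by (rule key[OF g e1 e3 e2])
qed

lemma infinite_orbits:
  assumes inf: "infinite (UNIV :: 'a::field set)"
  shows "infinite ((triples n [n] [b] [g1, g2, n - g1 - g2] :: ('a vec set list \<times> 'a vec set list \<times> 'a vec set list) set)
                   // orbit_rel n [n] [b] [g1, g2, n - g1 - g2])"
proof -
  let ?A = "(triples n [n] [b] [g1, g2, n - g1 - g2] :: ('a vec set list \<times> 'a vec set list \<times> 'a vec set list) set)"
  let ?r = "orbit_rel n [n] [b] [g1, g2, n - g1 - g2] :: (('a vec set list \<times> 'a vec set list \<times> 'a vec set list) \<times> _) set"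
  define F where "F t = ?r `` {trip t}" for t :: 'a
  have FA: "F t \<in> ?A // ?r" for t unfolding F_def quotient_def using trip_in[of t] by blast
  have inj: "inj F"
  proof (rule injI)
    fix t s :: 'a assume "F t = F s"
    moreover have "trip s \<in> F s" using io_refl[of s] unfolding F_def by blast
    ultimately have "trip s \<in> F t" by simp
    then have "(trip t, trip s) \<in> ?r" unfolding F_def by blast
    then show "t = s" by (rule io_key)
  qed
  have "infinite (range F)" using inf inj finite_imageD by blast
  moreover have "range F \<subseteq> ?A // ?r" using FA by blast
  ultimately show ?thesis using infinite_super by blast
qed

end

theorem proposition3p13:
  fixes n \<beta> \<gamma>1 \<gamma>2 \<gamma>3 :: nat
  assumes "infinite (UNIV :: 'a::field set)"
    and "(2::'a) \<noteq> 0"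
    and "4 \<le> \<beta>" and "\<beta> \<le> n - 2"
    and "\<gamma>1 \<ge> 2" and "\<gamma>2 \<ge> 2" and "\<gamma>3 \<ge> 2"
    and "\<gamma>1 + \<gamma>2 + \<gamma>3 = n"
  shows "infinite ((triples n [n] [\<beta>] [\<gamma>1, \<gamma>2, \<gamma>3] :: ('a vec set list \<times> 'a vec set list \<times> 'a vec set list) set)
                   // orbit_rel n [n] [\<beta>] [\<gamma>1, \<gamma>2, \<gamma>3])"
proof -
  define k where "k = n - 6"
  have nk: "n = k + 6" using assms(3,4) unfolding k_def by linarith
  have c: "cfg k \<gamma>1 \<gamma>2 \<beta>"
    by unfold_locales (use assms nk in linarith)+
  have g3: "\<gamma>3 = k + 6 - \<gamma>1 - \<gamma>2" using assms(8) nk by linarith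
  show ?thesis
    using cfg.infinite_orbits[OF c assms(1)] unfolding nk g3 .
qed

end
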